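(* Let $k\ge1$, $n\ge2$, and let $\phi$ be a monotone $[k]$-edge-labeling of $K^{(2)}_n$. For each $0\le i\le k+1$, the symmetric difference of $X_i$ and $\hat X_i$ has size at most $2$; in particular $\big||X_i|-|\hat X_i|\big|\le2$.
   Context: $K^{(2)}_n$ is the complete graph on $[n]$ with its natural order. A $[k]$-edge-labeling $\phi$ assigns to each pair $uv$ ($u<v$) a label $\phi(uv)\in\{1,\dots,k\}$; it is monotone if $\phi(uv)\le\phi(vw)$ whenever $u<v<w$. Define $\Phi_L(1)=0$ and $\Phi_L(v)=\max\{\phi(uv):u<v\}$ for $v>1$; define $\Phi_R(n)=k+1$ and $\Phi_R(v)=\min\{\phi(vw):w>v\}$ for $v<n$. For $0\le i\le k+1$ let $X_i=\{v\in[n]:\Phi_L(v)=i\}$ and $\hat X_i=\{v\in[n]:\Phi_R(v)=i\}$. *)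

theory Defs
  imports Main
begin

definition edge_labeling :: "nat \<Rightarrow> nat \<Rightarrow> (nat \<Rightarrow> nat \<Rightarrow> nat) \<Rightarrow> bool" where
  "edge_labeling n k phi \<longleftrightarrow>
     (\<forall>u v. 1 \<le> u \<and> u < v \<and> v \<le> n \<longrightarrow> phi u v \<in> {1..k})"

definition monotone_labeling :: "nat \<Rightarrow> nat \<Rightarrow> (nat \<Rightarrow> nat \<Rightarrow> nat) \<Rightarrow> bool" where
  "monotone_labeling n k phi \<longleftrightarrow> edge_labeling n k phi \<and>
     (\<forall>u v w. 1 \<le> u \<and> u < v \<and> v < w \<and> w \<le> n \<longrightarrow> phi u v \<le> phi v w)"

definition PhiL :: "(nat \<Rightarrow> nat \<Rightarrow> nat) \<Rightarrow> nat \<Rightarrow> nat" where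
  "PhiL phi v = (if v = 1 then 0 else Max {phi u v | u. 1 \<le> u \<and> u < v})"

definition PhiR :: "nat \<Rightarrow> nat \<Rightarrow> (nat \<Rightarrow> nat \<Rightarrow> nat) \<Rightarrow> nat \<Rightarrow> nat" where
  "PhiR n k phi v = (if v = n then k + 1 else Min {phi v w | w. v < w \<and> w \<le> n})"

definition Xset :: "nat \<Rightarrow> (nat \<Rightarrow> nat \<Rightarrow> nat) \<Rightarrow> nat \<Rightarrow> nat set" where
  "Xset n phi i = {v \<in> {1..n}. PhiL phi v = i}"

definition Xhat :: "nat \<Rightarrow> nat \<Rightarrow> (nat \<Rightarrow> nat \<Rightarrow> nat) \<Rightarrow> nat \<Rightarrow> nat set" where
  "Xhat n k phi i = {v \<in> {1..n}. PhiR n k phi v = i}"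

end

theory Submission
  imports Defs
begin

lemma setL: "{phi u v | u. 1 \<le> u \<and> u < v} = (\<lambda>u. phi u v) ` {1..<v}"
  by auto

lemma setR: "{phi v w | w. v < w \<and> w \<le> n} = (\<lambda>w. phi v w) ` {v<..n}"
  by auto

lemma b_le_a:
  assumes m: "monotone_labeling n k phi" and "1 \<le> v" "v < w" "w \<le> n"
  shows "PhiR n k phi v \<le> PhiL phi w"
proof -
  have "PhiR n k phi v = Min ((\<lambda>w. phi v w) ` {v<..n})"
    using assms unfolding PhiR_def setR by simp
  also have "\<dots> \<le> phi v w" using assms by (intro Min_le) auto
  also have "\<dots> \<le> Max ((\<lambda>u. phi u w) ` {1..<w})" using assms by (intro Max_ge) auto
  also have "\<dots> = PhiL phi w" using assms unfolding PhiL_def setL by simp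
  finally show ?thesis .
qed

lemma a_le_b:
  assumes m: "monotone_labeling n k phi" and "1 \<le> v" "v \<le> n" "n \<ge> 2"
  shows "PhiL phi v \<le> PhiR n k phi v"
proof (cases "v = 1")
  case True thus ?thesis by (simp add: PhiL_def)
next
  case v1: False
  have L: "PhiL phi v = Max ((\<lambda>u. phi u v) ` {1..<v})"
    using v1 unfolding PhiL_def setL by simp
  show ?thesis
  proof (cases "v = n")
    case True
    have "\<forall>u\<in>{1..<v}. phi u v \<le> k" using m True unfolding monotone_labeling_def edge_labeling_def
      by fastforce
    then have "PhiL phi v \<le> k" unfolding L using v1 assms by (subst Max_le_iff) auto
    then show ?thesis using True by (simp add: PhiR_def)
  next
    case False
    have R: "PhiR n k phi v = Min ((\<lambda>w. phi v w) ` {v<..n})"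
      using False unfolding PhiR_def setR by simp
    have "\<forall>u\<in>{1..<v}. \<forall>w\<in>{v<..n}. phi u v \<le> phi v w"
      using m unfolding monotone_labeling_def by auto
    then show ?thesis unfolding L R using v1 False assms
      by (subst Max_le_iff; simp; subst Min_ge_iff; auto)
  qed
qed

theorem lemma4p8:
  fixes n k :: nat and phi :: "nat \<Rightarrow> nat \<Rightarrow> nat"
  assumes "k \<ge> 1" and "n \<ge> 2" and "monotone_labeling n k phi" and "i \<le> k + 1"
  shows "card ((Xset n phi i - Xhat n k phi i) \<union> (Xhat n k phi i - Xset n phi i)) \<le> 2
    \<and> \<bar>int (card (Xset n phi i)) - int (card (Xhat n k phi i))\<bar> \<le> 2"
proof -
  define X where "X = Xset n phi i"
  define Y where "Y = Xhat n k phi i"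
  have fX: "finite X" and fY: "finite Y" unfolding X_def Y_def Xset_def Xhat_def by auto
  have ab: "\<And>v. v \<in> {1..n} \<Longrightarrow> PhiL phi v \<le> PhiR n k phi v"
    using a_le_b assms by auto
  have ba: "\<And>v w. v \<in> {1..n} \<Longrightarrow> w \<in> {1..n} \<Longrightarrow> v < w \<Longrightarrow> PhiR n k phi v \<le> PhiL phi w"
    using b_le_a assms by auto
  have c1: "card (X - Y) \<le> 1"
  proof -
  have "finite (X - Y)" using fX by auto
  moreover have "\<forall>x\<in>X - Y. \<forall>y\<in>X - Y. x = y"
    proof (intro ballI, rule ccontr)
      fix x y assume x: "x \<in> X - Y" and y: "y \<in> X - Y" and ne: "x \<noteq> y"
      have key: "\<And>v w. v \<in> X - Y \<Longrightarrow> w \<in> X - Y \<Longrightarrow> v < w \<Longrightarrow> False"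
      proof -
        fix v w assume v: "v \<in> X - Y" and w: "w \<in> X - Y" and vw: "v < w"
        have "PhiL phi v = i" "PhiR n k phi v \<noteq> i" "v \<in> {1..n}" using v unfolding X_def Y_def Xset_def Xhat_def by auto
        moreover have "PhiL phi w = i" "w \<in> {1..n}" using w unfolding X_def Xset_def by auto
        ultimately show False using ab[of v] ba[of v w] vw by fastforce
      qed
      show False using key[OF x y] key[OF y x] ne by linarith
    qed
  ultimately show ?thesis by (simp add: card_le_Suc0_iff_eq)
  qed
  have c2: "card (Y - X) \<le> 1"
  proof -
  have "finite (Y - X)" using fY by auto
  moreover have "\<forall>x\<in>Y - X. \<forall>y\<in>Y - X. x = y"
    proof (intro ballI, rule ccontr)
      fix x y assume x: "x \<in> Y - X" and y: "y \<in> Y - X" and ne: "x \<noteq> y"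
      have key: "\<And>v w. v \<in> Y - X \<Longrightarrow> w \<in> Y - X \<Longrightarrow> v < w \<Longrightarrow> False"
      proof -
        fix v w assume v: "v \<in> Y - X" and w: "w \<in> Y - X" and vw: "v < w"
        have "PhiR n k phi v = i" "v \<in> {1..n}" using v unfolding X_def Y_def Xset_def Xhat_def by auto
        moreover have "PhiR n k phi w = i" "PhiL phi w \<noteq> i" "w \<in> {1..n}" using w unfolding X_def Y_def Xset_def Xhat_def by auto
        ultimately show False using ab[of w] ba[of v w] vw by fastforce
      qed
      show False using key[OF x y] key[OF y x] ne by linarith
    qed
  ultimately show ?thesis by (simp add: card_le_Suc0_iff_eq)
  qed
  have s: "card ((X - Y) \<union> (Y - X)) \<le> 2"
    using card_Un_le[of "X - Y" "Y - X"] c1 c2 by linarith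
  have e1: "card X = card (X \<inter> Y) + card (X - Y)"
    using fX card_Int_Diff[of X Y] by simp
  have e2: "card Y = card (X \<inter> Y) + card (Y - X)"
    using fY card_Int_Diff[of Y X] by (simp add: Int_commute)
  have "\<bar>int (card X) - int (card Y)\<bar> \<le> 2" using e1 e2 c1 c2 by linarith
  then show ?thesis using s unfolding X_def Y_def by simp
qed

end
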